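(* Let $q\ge 3$ be a prime power, $n\ge1$, and let $C\subseteq\mathbb{F}_q^n$ be a non-zero linear code of dimension $1\le t\le n$. For any integer $1\le r\le t$, $$d_r(C)=\min\{\dim_{\mathbb{F}_q}(A): A\in\mathcal{A}^H_q(n),\ \dim_{\mathbb{F}_q}(A\cap C)\ge r\}.$$
   Context: For $v\in\mathbb{F}_q^n$, $\mathrm{wt}(v):=|\{i: v_i\ne0\}|$; for a linear code $C$, $\mathrm{maxwt}(C):=\max\{\mathrm{wt}(c):c\in C\}$. One always has $\dim_{\mathbb{F}_q}(C)\le\mathrm{maxwt}(C)$; $\mathcal{A}^H_q(n)$ is the set of linear codes in $\mathbb{F}_q^n$ attaining equality (optimal linear anticodes). The support of a subspace $D$ is $\chi(D):=\{i\in\{1,\dots,n\}:\exists d\in D,\ d_i\ne0\}$, and the $r$-th generalized Hamming weight is $d_r(C):=\min\{|\chi(D)|: D\subseteq C,\ \dim_{\mathbb{F}_q}(D)=r\}$. *)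

theory Defs
  imports "HOL-Analysis.Analysis"
begin

text \<open>Ambient space F_q^n is rendered as 'a ^ 'n with 'a a finite field
  (so CARD('a) is a prime power q) and n = CARD('n). Linear codes are
  vec.subspace's, dimension is vec.dim (dimension over 'a).\<close>

definition wt :: "('a::zero) ^ 'n \<Rightarrow> nat" where
  "wt v = card {i. v $ i \<noteq> 0}"

definition maxwt :: "(('a::zero) ^ 'n) set \<Rightarrow> nat" where
  "maxwt C = Max (wt ` C)"

definition supp :: "(('a::zero) ^ 'n) set \<Rightarrow> 'n set" where
  "supp D = {i. \<exists>d\<in>D. d $ i \<noteq> 0}"

definition anticodes :: "(('a::{finite,field}) ^ ('n::finite)) set set" where
  "anticodes = {A. vec.subspace A \<and> vec.dim A = maxwt A}"

definition ghw :: "(('a::{finite,field}) ^ ('n::finite)) set \<Rightarrow> nat \<Rightarrow> nat" where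
  "ghw C r = Min {card (supp D) | D. vec.subspace D \<and> D \<subseteq> C \<and> vec.dim D = r}"

end

theory Submission
  imports Defs
begin

lemma wt_le_maxwt:
  fixes A :: "(('a::{finite,field}) ^ ('n::finite)) set"
  assumes "v \<in> A" shows "wt v \<le> maxwt A"
  unfolding maxwt_def using assms by (intro Max_ge) auto

lemma key:
  fixes A :: "(('a::{finite,field}) ^ ('n::finite)) set"
  assumes q: "CARD('a) \<ge> 3" and sub: "vec.subspace A" and eq: "vec.dim A = maxwt A"
  shows "card (supp A) \<le> vec.dim A"
proof -
  define Inj where "Inj I \<longleftrightarrow> (\<forall>a\<in>A. (\<forall>i\<in>I. a$i=0) \<longrightarrow> a = 0)" for I :: "'n set"
  have "Inj UNIV" unfolding Inj_def by (auto simp: vec_eq_iff)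
  define k where "k = (LEAST k. \<exists>I. Inj I \<and> card I = k)"
  have "\<exists>I. Inj I \<and> card I = k" unfolding k_def
    by (rule LeastI_ex) (use \<open>Inj UNIV\<close> in blast)
  then obtain I where I: "Inj I" "card I = k" by blast
  have minI: "\<not> Inj J" if "card J < card I" for J
    using not_less_Least[of "card J" "\<lambda>k. \<exists>I. Inj I \<and> card I = k"] that I(2) k_def by auto
  have "\<forall>i\<in>I. \<exists>g. g \<in> A \<and> g$i = 1 \<and> (\<forall>j\<in>I-{i}. g$j = 0)"
  proof
    fix i assume i: "i \<in> I"
    have "card (I - {i}) < card I" using i by (intro card_Diff1_less) auto
    then have "\<not> Inj (I - {i})" by (rule minI)
    then obtain a where a: "a \<in> A" "\<forall>j\<in>I-{i}. a$j = 0" "a \<noteq> 0" unfolding Inj_def by blast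
    have ai: "a$i \<noteq> 0"
    proof
      assume "a$i = 0"
      then have "\<forall>j\<in>I. a$j = 0" using a(2) by blast
      then show False using I(1) a unfolding Inj_def by blast
    qed
    show "\<exists>g. g \<in> A \<and> g$i = 1 \<and> (\<forall>j\<in>I-{i}. g$j = 0)"
      using ai a by (intro exI[of _ "inverse (a$i) *s a"]) (auto intro: vec.subspace_scale[OF sub])
  qed
  then obtain g where g: "\<And>i. i\<in>I \<Longrightarrow> g i \<in> A \<and> g i $ i = 1 \<and> (\<forall>j\<in>I-{i}. g i $ j = 0)"
    by metis
  have comb: "(\<Sum>i\<in>I. c i *s g i) $ j = c j" if "j \<in> I" for c j
  proof -
    have "(\<Sum>i\<in>I. c i *s g i) $ j = (\<Sum>i\<in>I. c i * g i $ j)" by simp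
    also have "\<dots> = (\<Sum>i\<in>I. if i = j then c i else 0)"
      by (rule sum.cong) (use g that in auto)
    also have "\<dots> = c j" using that by simp
    finally show ?thesis .
  qed
  have combA: "(\<Sum>i\<in>I. c i *s g i) \<in> A" for c
    by (rule vec.subspace_sum[OF sub]) (use g in \<open>auto intro: vec.subspace_scale[OF sub]\<close>)
  have span: "a = (\<Sum>i\<in>I. a$i *s g i)" if "a \<in> A" for a
  proof -
    have "a - (\<Sum>i\<in>I. a$i *s g i) \<in> A" using vec.subspace_diff[OF sub that combA] .
    moreover have "\<forall>j\<in>I. (a - (\<Sum>i\<in>I. a$i *s g i)) $ j = 0"
      using comb[of _ "\<lambda>i. a$i"] by simp
    ultimately show ?thesis using I(1) unfolding Inj_def by auto
  qed
  have dimI: "vec.dim A \<le> card I"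
  proof -
    have "A \<subseteq> vec.span (g ` I)"
    proof
      fix a assume "a \<in> A"
      then have "a = (\<Sum>i\<in>I. a$i *s g i)" by (rule span)
      also have "\<dots> \<in> vec.span (g ` I)"
        by (intro vec.span_sum vec.span_scale vec.span_base) auto
      finally show "a \<in> vec.span (g ` I)" .
    qed
    then have "vec.dim A \<le> card (g ` I)" by (intro vec.dim_le_card) auto
    also have "\<dots> \<le> card I" by (rule card_image_le) simp
    finally show ?thesis .
  qed
  have wtI: "card J \<le> wt v" if "\<forall>i\<in>J. v$i \<noteq> 0" for v :: "'a^'n" and J
    unfolding wt_def using that by (intro card_mono) auto
  show ?thesis
  proof (cases "supp A \<subseteq> I")
    case True
    have "card (supp A) \<le> card I" using True by (intro card_mono) auto
    also have "\<dots> \<le> wt (\<Sum>i\<in>I. 1 *s g i)" using comb[of _ "\<lambda>_. 1"] by (intro wtI) simp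
    also have "\<dots> \<le> maxwt A" by (rule wt_le_maxwt[OF combA])
    finally show ?thesis using eq by simp
  next
    case False
    then obtain l where l: "l \<in> supp A" "l \<notin> I" by blast
    then obtain a where a: "a \<in> A" "a$l \<noteq> 0" unfolding supp_def by blast
    have "a $ l = (\<Sum>i\<in>I. a$i *s g i) $ l" using span[OF a(1)] by simp
    also have "\<dots> = (\<Sum>i\<in>I. a$i * g i $ l)" by simp
    finally have "(\<Sum>i\<in>I. a$i * g i $ l) \<noteq> 0" using a(2) by simp
    then obtain j where j: "j \<in> I" "g j $ l \<noteq> 0"
      by (metis (no_types, lifting) mult_zero_right sum.neutral)
    define c where "c = g j $ l"
    define s where "s = (\<Sum>i\<in>I-{j}. g i $ l)"
    have "card ({0, - s / c} :: 'a set) < CARD('a)"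
    proof -
      have "card ({0, - s / c} :: 'a set) \<le> 2" by (simp add: card_insert_if)
      then show ?thesis using q by linarith
    qed
    then obtain \<mu> :: 'a where mu: "\<mu> \<notin> {0, - s / c}"
      by (metis UNIV_I card_mono finite leD subsetI)
    define lam where "lam i = (if i = j then \<mu> else 1)" for i
    define v where "v = (\<Sum>i\<in>I. lam i *s g i)"
    have vl: "v $ l = \<mu> * c + s"
    proof -
      have "v $ l = (\<Sum>i\<in>I. lam i * g i $ l)" unfolding v_def by simp
      also have "\<dots> = lam j * g j $ l + (\<Sum>i\<in>I-{j}. lam i * g i $ l)"
        using j(1) by (simp add: sum.remove)
      also have "\<dots> = \<mu> * c + s" unfolding lam_def c_def s_def by simp
      finally show ?thesis .
    qed
    have "\<mu> * c + s \<noteq> 0"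
    proof
      assume "\<mu> * c + s = 0"
      then have "\<mu> = - s / c" using j(2) unfolding c_def by (simp add: field_simps add_eq_0_iff)
      then show False using mu by simp
    qed
    then have "\<forall>i\<in>insert l I. v$i \<noteq> 0" using vl comb[of _ lam] mu unfolding v_def lam_def
      by auto
    then have "card (insert l I) \<le> wt v" by (rule wtI)
    moreover have "card (insert l I) = card I + 1" using l(2) by simp
    moreover have "wt v \<le> maxwt A" unfolding v_def by (rule wt_le_maxwt[OF combA])
    ultimately show ?thesis using eq dimI by simp
  qed
qed

lemma sub_dim:
  fixes W :: "(('a::{finite,field}) ^ ('n::finite)) set"
  assumes "vec.subspace W" "r \<le> vec.dim W"
  shows "\<exists>D. vec.subspace D \<and> D \<subseteq> W \<and> vec.dim D = r"
proof -
  obtain B where B: "B \<subseteq> W" "vec.independent B" "W \<subseteq> vec.span B" "card B = vec.dim W"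
    by (rule vec.basis_exists)
  have "finite B" by simp
  obtain B' where B': "B' \<subseteq> B" "card B' = r" using obtain_subset_with_card_n[of r B] B(4) assms(2) by auto
  have ind: "vec.independent B'" using B(2) B'(1) vec.independent_mono by blast
  show ?thesis
  proof (intro exI conjI)
    show "vec.subspace (vec.span B')" by (rule vec.subspace_span)
    show "vec.span B' \<subseteq> W" using B(1) B'(1) assms(1) by (intro vec.span_minimal) auto
    show "vec.dim (vec.span B') = r" using vec.dim_span_eq_card_independent[OF ind] B'(2) by simp
  qed
qed

lemma coord_anticode:
  fixes S :: "('n::finite) set"
  defines "V \<equiv> {x::('a::{finite,field})^'n. \<forall>i. i \<notin> S \<longrightarrow> x$i = 0}"
  shows "V \<in> anticodes" "vec.dim V = card S"
proof -
  show dV: "vec.dim V = card S" unfolding V_def by (rule dim_substandard_cart)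
  have sV: "vec.subspace V" unfolding V_def using subspace_substandard_cart[of "\<lambda>i. i \<notin> S"] by simp
  define e :: "'a^'n" where "e = (\<chi> i. if i \<in> S then 1 else 0)"
  have eV: "e \<in> V" unfolding V_def e_def by simp
  have we: "wt e = card S" unfolding wt_def e_def by (rule arg_cong[of _ _ card]) auto
  have "\<forall>x\<in>V. wt x \<le> card S" unfolding wt_def V_def by (auto intro!: card_mono)
  then have "Max (wt ` V) \<le> card S" using eV by (intro Max.boundedI) auto
  moreover have "wt e \<le> Max (wt ` V)" using eV by (intro Max_ge) auto
  ultimately have "maxwt V = card S" unfolding maxwt_def using we by linarith
  then show "V \<in> anticodes" unfolding anticodes_def using sV dV by simp
qed

theorem theorem2p7:
  fixes C :: "(('a::{finite,field}) ^ ('n::finite)) set" and r :: nat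
  assumes "CARD('a) \<ge> 3"
    and "vec.subspace C" and "C \<noteq> {0}"
    and "1 \<le> r" and "r \<le> vec.dim C"
  shows "ghw C r = Min {vec.dim A | A. A \<in> anticodes \<and> vec.dim (A \<inter> C) \<ge> r}"
proof -
  define X where "X = {card (supp D) | D. vec.subspace D \<and> D \<subseteq> C \<and> vec.dim D = r}"
  define Y where "Y = {vec.dim A | A. A \<in> anticodes \<and> vec.dim (A \<inter> C) \<ge> r}"
  have cs: "card (supp D) \<le> CARD('n)" for D :: "('a^'n) set" by (rule card_mono) auto
  have "X \<subseteq> {..CARD('n)}" unfolding X_def using cs by auto
  then have fX: "finite X" by (rule finite_subset) simp
  have "Y \<subseteq> {..CARD('n)}" unfolding Y_def using dim_subset_UNIV_cart_gen by auto
  then have fY: "finite Y" by (rule finite_subset) simp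
  obtain D0 where D0: "vec.subspace D0" "D0 \<subseteq> C" "vec.dim D0 = r" using sub_dim[OF assms(2,5)] by blast
  have "card (supp D0) \<in> X" unfolding X_def using D0 by auto
  then have neX: "X \<noteq> {}" by auto
  have XY: "\<exists>y\<in>Y. y \<le> x" if xX: "x \<in> X" for x
  proof -
    obtain D where D: "x = card (supp D)" "vec.subspace D" "D \<subseteq> C" "vec.dim D = r"
      using xX unfolding X_def by blast
    define V where "V = {x::'a^'n. \<forall>i. i \<notin> supp D \<longrightarrow> x$i = 0}"
    have "D \<subseteq> V" unfolding V_def supp_def by auto
    then have "D \<subseteq> V \<inter> C" using D by auto
    then have "r \<le> vec.dim (V \<inter> C)" using D(4) vec.dim_subset[of D "V \<inter> C"] by simp
    moreover have "V \<in> anticodes" using coord_anticode(1)[of "supp D"] unfolding V_def .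
    ultimately have "vec.dim V \<in> Y" unfolding Y_def by auto
    moreover have "vec.dim V = x" using coord_anticode(2)[of "supp D"] D(1) unfolding V_def by simp
    ultimately show ?thesis by (intro bexI[of _ "vec.dim V"]) simp_all
  qed
  have YX: "\<exists>x\<in>X. x \<le> y" if yY: "y \<in> Y" for y
  proof -
    obtain A where A: "y = vec.dim A" "A \<in> anticodes" "r \<le> vec.dim (A \<inter> C)"
      using yY unfolding Y_def by blast
    have sA: "vec.subspace A" and eA: "vec.dim A = maxwt A" using A(2) unfolding anticodes_def by auto
    have "vec.subspace (A \<inter> C)" using sA assms(2) by (rule vec.subspace_inter)
    then obtain D where D: "vec.subspace D" "D \<subseteq> A \<inter> C" "vec.dim D = r"
      using sub_dim A(3) by blast
    have "card (supp D) \<le> card (supp A)" using D(2) unfolding supp_def by (intro card_mono) auto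
    also have "\<dots> \<le> vec.dim A" using key[OF assms(1) sA eA] .
    moreover have "card (supp D) \<in> X" using D unfolding X_def by auto
    ultimately show ?thesis using A(1) by (intro bexI[of _ "card (supp D)"]) simp_all
  qed
  have neY: "Y \<noteq> {}" using XY neX by auto
  have "Min X \<le> Min Y"
  proof -
    obtain x where "x \<in> X" "x \<le> Min Y" using YX[OF Min_in[OF fY neY]] by blast
    then show ?thesis using Min_le[OF fX] by (meson order_trans)
  qed
  moreover have "Min Y \<le> Min X"
  proof -
    obtain y where "y \<in> Y" "y \<le> Min X" using XY[OF Min_in[OF fX neX]] by blast
    then show ?thesis using Min_le[OF fY] by (meson order_trans)
  qed
  ultimately show ?thesis unfolding ghw_def X_def[symmetric] Y_def[symmetric] by simp
qed

end
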